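(* Let $H,K$ be subgroups of $IA_n$ with $H\cap K=\{1\}$ and $K$ normalizing $H$, so that $HK=H\rtimes K\subseteq IA_n$. Suppose that: (1) the semi-direct product is almost-direct, i.e. $[K,H]\subseteq[H,H]$; (2) for every $i\ge1$, the images of $\mathcal A_i\cap H$ and $\mathcal A_i\cap K$ in $\mathcal A_i/\mathcal A_{i+1}$ intersect trivially (equivalently, no element of $H$ and element of $K$ induce the same nonzero derivation of the free Lie ring through the Johnson morphism); (3) the Andreadakis equality holds for $H$ and for $K$: $\Gamma_j(H)=\mathcal A_j\cap H$ and $\Gamma_j(K)=\mathcal A_j\cap K$ for all $j\ge1$. Then the Andreadakis equality holds for $H\rtimes K$: $\Gamma_j(H\rtimes K)=\mathcal A_j\cap (H\rtimes K)$ for all $j\ge1$.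
   Context: $F_n$ is the free group on $n$ generators, $\Gamma_*$ denotes the lower central series ($\Gamma_1(G)=G$, $\Gamma_{k+1}(G)=[G,\Gamma_k(G)]$, $[x,y]=xyx^{-1}y^{-1}$). $IA_n$ is the subgroup of $\mathrm{Aut}(F_n)$ of automorphisms acting trivially on $F_n^{ab}$. The Andreadakis filtration $IA_n=\mathcal A_1\supseteq\mathcal A_2\supseteq\cdots$ is defined by: $\mathcal A_j$ is the subgroup of automorphisms acting trivially on $F_n/\Gamma_{j+1}(F_n)$, i.e. $\sigma(x)x^{-1}\in\Gamma_{j+1}(F_n)$ for all $x\in F_n$. The Johnson morphism sends the class of $\sigma\in\mathcal A_j$ to the degree-$j$ derivation of the free Lie ring $\mathcal L(F_n)=\bigoplus_k\Gamma_k(F_n)/\Gamma_{k+1}(F_n)$ induced by $x\mapsto\sigma(x)x^{-1}$; it is injective on $\bigoplus_j\mathcal A_j/\mathcal A_{j+1}$. *)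

theory Defs
  imports "HOL-Algebra.Algebra"
begin

text \<open>A letter (i, True) is the generator x_i, (i, False) its inverse.\<close>
type_synonym fword = "(nat \<times> bool) list"

fun fred :: "fword \<Rightarrow> fword" where
  "fred [] = []"
| "fred (x # xs) =
     (case fred xs of
        [] \<Rightarrow> [x]
      | y # ys \<Rightarrow> (if fst y = fst x \<and> snd y \<noteq> snd x then ys else x # y # ys))"

definition free_group :: "nat \<Rightarrow> fword monoid" where
  "free_group n =
     \<lparr> carrier = {w. fred w = w \<and> (\<forall>x\<in>set w. fst x < n)},
       monoid.mult = (\<lambda>u v. fred (u @ v)),
       monoid.one = [] \<rparr>"

definition comm_sub :: "('a, 'b) monoid_scheme \<Rightarrow> 'a set \<Rightarrow> 'a set \<Rightarrow> 'a set" where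
  "comm_sub G A B = generate G
     {a \<otimes>\<^bsub>G\<^esub> b \<otimes>\<^bsub>G\<^esub> inv\<^bsub>G\<^esub> a \<otimes>\<^bsub>G\<^esub> inv\<^bsub>G\<^esub> b | a b. a \<in> A \<and> b \<in> B}"

text \<open>lower_central G H j is Gamma_j(H) for j >= 1 (Gamma_1(H) = H,
  Gamma_{k+1}(H) = [H, Gamma_k(H)]); index 0 is set to H by convention and never used.\<close>
fun lower_central :: "('a, 'b) monoid_scheme \<Rightarrow> 'a set \<Rightarrow> nat \<Rightarrow> 'a set" where
  "lower_central G H 0 = H"
| "lower_central G H (Suc 0) = H"
| "lower_central G H (Suc (Suc k)) = comm_sub G H (lower_central G H (Suc k))"

abbreviation AutF :: "nat \<Rightarrow> (fword \<Rightarrow> fword) monoid" where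
  "AutF n \<equiv> AutoGroup (free_group n)"

definition andreadakis :: "nat \<Rightarrow> nat \<Rightarrow> (fword \<Rightarrow> fword) set" where
  "andreadakis n j =
     {\<sigma> \<in> carrier (AutF n). \<forall>x \<in> carrier (free_group n).
        \<sigma> x \<otimes>\<^bsub>free_group n\<^esub> inv\<^bsub>free_group n\<^esub> x
          \<in> lower_central (free_group n) (carrier (free_group n)) (Suc j)}"

definition IA :: "nat \<Rightarrow> (fword \<Rightarrow> fword) set" where
  "IA n = andreadakis n 1"

end

theory Submission
  imports Defs
begin


definition cancl :: "nat \<times> bool \<Rightarrow> nat \<times> bool \<Rightarrow> bool" where
  "cancl x y \<longleftrightarrow> fst y = fst x \<and> snd y \<noteq> snd x"

definition fstep :: "nat \<times> bool \<Rightarrow> fword \<Rightarrow> fword" where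
  "fstep x w = (case w of [] \<Rightarrow> [x] | y # ys \<Rightarrow> (if cancl x y then ys else x # y # ys))"

lemma fred_cons: "fred (x # xs) = fstep x (fred xs)"
  by (simp add: fstep_def cancl_def split: list.splits)

declare fred.simps(2)[simp del]

fun reduced :: "fword \<Rightarrow> bool" where
  "reduced [] = True"
| "reduced [x] = True"
| "reduced (x # y # ys) = (\<not> cancl x y \<and> reduced (y # ys))"

lemma reduced_tl: "reduced (x # xs) \<Longrightarrow> reduced xs"
  by (cases xs) auto

lemma reduced_fstep: "reduced w \<Longrightarrow> reduced (fstep x w)"
  by (cases w) (auto simp: fstep_def dest: reduced_tl)

lemma reduced_fred: "reduced (fred w)"
  by (induction w) (auto simp: fred_cons reduced_fstep)

lemma fred_reduced: "reduced w \<Longrightarrow> fred w = w"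
proof (induction w)
  case (Cons x xs)
  then have "fred xs = xs" using reduced_tl by blast
  then show ?case using Cons.prems by (cases xs) (auto simp: fred_cons fstep_def)
qed simp

lemma fred_idem: "fred (fred w) = fred w"
  by (simp add: fred_reduced reduced_fred)

lemma fred_append: "fred (u @ v) = foldr fstep u (fred v)"
  by (induction u) (auto simp: fred_cons)

lemma reduced_foldr: "reduced w \<Longrightarrow> reduced (foldr fstep u w)"
  by (induction u) (auto simp: reduced_fstep)

lemma cancl_sym: "cancl x y \<Longrightarrow> cancl y x"
  by (auto simp: cancl_def)

lemma cancl_unique: "cancl x y \<Longrightarrow> cancl y z \<Longrightarrow> z = x"
  by (cases x; cases y; cases z) (auto simp: cancl_def)

lemma fstep_cancel: "reduced z \<Longrightarrow> cancl x y \<Longrightarrow> fstep x (fstep y z) = z"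
proof (cases z)
  case Nil
  assume "cancl x y" then show ?thesis using Nil by (simp add: fstep_def)
next
  case (Cons y' zs)
  assume r: "reduced z" and c: "cancl x y"
  show ?thesis
  proof (cases "cancl y y'")
    case True
    then have "y' = x" using cancl_unique[OF c] by simp
    then show ?thesis using Cons True r by (cases zs) (auto simp: fstep_def)
  next
    case False
    then show ?thesis using Cons c by (simp add: fstep_def)
  qed
qed

lemma foldr_fstep_step:
  assumes "reduced r" "reduced w"
  shows "foldr fstep (fstep x r) w = fstep x (foldr fstep r w)"
proof (cases r)
  case Nil then show ?thesis by (simp add: fstep_def)
next
  case (Cons y r')
  show ?thesis
  proof (cases "cancl x y")
    case True
    have "reduced (foldr fstep r' w)" using assms reduced_foldr by blast
    then show ?thesis using Cons True fstep_cancel by (simp add: fstep_def)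
  next
    case False then show ?thesis using Cons by (simp add: fstep_def)
  qed
qed

lemma foldr_fred: "reduced w \<Longrightarrow> foldr fstep (fred u) w = foldr fstep u w"
  by (induction u) (auto simp: fred_cons foldr_fstep_step reduced_fred)

lemma set_fstep: "set (fstep x w) \<subseteq> insert x (set w)"
  by (cases w) (auto simp: fstep_def)

lemma set_fred: "set (fred w) \<subseteq> set w"
proof (induction w)
  case (Cons x xs)
  then show ?case using set_fstep[of x "fred xs"] by (auto simp: fred_cons)
qed simp

definition flipw :: "fword \<Rightarrow> fword" where
  "flipw w = rev (map (\<lambda>(i, b). (i, \<not> b)) w)"

lemma flipw_cancel: "reduced x \<Longrightarrow> foldr fstep (flipw x) x = []"
proof (induction x)
  case Nil then show ?case by (simp add: flipw_def)
next
  case (Cons a x)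
  have "foldr fstep (flipw (a # x)) (a # x) = foldr fstep (flipw x) (fstep (fst a, \<not> snd a) (a # x))"
    by (simp add: flipw_def split_beta)
  also have "fstep (fst a, \<not> snd a) (a # x) = x" by (simp add: fstep_def cancl_def)
  finally show ?case using Cons reduced_tl by metis
qed

lemma group_free_group: "group (free_group n)"
proof (rule groupI)
  fix x y assume "x \<in> carrier (free_group n)" "y \<in> carrier (free_group n)"
  then show "x \<otimes>\<^bsub>free_group n\<^esub> y \<in> carrier (free_group n)"
    using set_fred[of "x @ y"] by (auto simp: free_group_def fred_idem)
next
  show "\<one>\<^bsub>free_group n\<^esub> \<in> carrier (free_group n)" by (simp add: free_group_def)
next
  fix x y z assume "x \<in> carrier (free_group n)" "y \<in> carrier (free_group n)" "z \<in> carrier (free_group n)"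
  have "fred (fred (x @ y) @ z) = foldr fstep (fred (x @ y)) (fred z)"
    by (simp only: fred_append[of "fred (x @ y)"])
  also have "\<dots> = foldr fstep (x @ y) (fred z)" by (simp only: foldr_fred reduced_fred)
  finally have "fred (fred (x @ y) @ z) = foldr fstep x (foldr fstep y (fred z))" by simp
  moreover have "fred (x @ fred (y @ z)) = foldr fstep x (foldr fstep y (fred z))"
    by (simp add: fred_append fred_reduced reduced_foldr reduced_fred)
  ultimately show "x \<otimes>\<^bsub>free_group n\<^esub> y \<otimes>\<^bsub>free_group n\<^esub> z = x \<otimes>\<^bsub>free_group n\<^esub> (y \<otimes>\<^bsub>free_group n\<^esub> z)"
    by (simp add: free_group_def)
next
  fix x assume "x \<in> carrier (free_group n)"
  then show "\<one>\<^bsub>free_group n\<^esub> \<otimes>\<^bsub>free_group n\<^esub> x = x" by (simp add: free_group_def)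
next
  fix x assume x: "x \<in> carrier (free_group n)"
  let ?y = "fred (flipw x)"
  have "?y \<in> carrier (free_group n)"
    using x set_fred[of "flipw x"] by (fastforce simp: free_group_def fred_idem flipw_def)
  moreover have "?y \<otimes>\<^bsub>free_group n\<^esub> x = \<one>\<^bsub>free_group n\<^esub>"
  proof -
    have rx: "reduced x" using x reduced_fred by (metis (mono_tags) free_group_def mem_Collect_eq partial_object.select_convs(1))
    have "fred (?y @ x) = foldr fstep (fred (flipw x)) (fred x)" by (simp add: fred_append)
    also have "\<dots> = foldr fstep (flipw x) x" using rx by (simp add: fred_reduced foldr_fred)
    also have "\<dots> = []" using rx flipw_cancel by simp
    finally show ?thesis by (simp add: free_group_def)
  qed
  ultimately show "\<exists>y\<in>carrier (free_group n). y \<otimes>\<^bsub>free_group n\<^esub> x = \<one>\<^bsub>free_group n\<^esub>" by blast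
qed




definition cmt :: "('a, 'b) monoid_scheme \<Rightarrow> 'a \<Rightarrow> 'a \<Rightarrow> 'a" where
  "cmt G x y = x \<otimes>\<^bsub>G\<^esub> y \<otimes>\<^bsub>G\<^esub> inv\<^bsub>G\<^esub> x \<otimes>\<^bsub>G\<^esub> inv\<^bsub>G\<^esub> y"

context group begin

lemma cancel_l1: "x \<in> carrier G \<Longrightarrow> y \<in> carrier G \<Longrightarrow> x \<otimes> (inv x \<otimes> y) = y"
  by (simp add: m_assoc[symmetric])
lemma cancel_l2: "x \<in> carrier G \<Longrightarrow> y \<in> carrier G \<Longrightarrow> inv x \<otimes> (x \<otimes> y) = y"
  by (simp add: m_assoc[symmetric])

lemmas gsimps = m_assoc inv_mult_group cancel_l1 cancel_l2

lemma tele: "a \<in> carrier G \<Longrightarrow> y \<in> carrier G \<Longrightarrow> x \<in> carrier G \<Longrightarrow> (a \<otimes> inv y) \<otimes> (y \<otimes> inv x) = a \<otimes> inv x"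
  by (simp add: gsimps)

lemma inv_diff: "a \<in> carrier G \<Longrightarrow> b \<in> carrier G \<Longrightarrow> inv (a \<otimes> inv b) = b \<otimes> inv a"
  by (simp add: gsimps)

lemma cmt_closed[simp]: "x \<in> carrier G \<Longrightarrow> y \<in> carrier G \<Longrightarrow> cmt G x y \<in> carrier G"
  by (simp add: cmt_def)

lemma hall_witt:
  assumes [simp]: "x \<in> carrier G" "y \<in> carrier G" "z \<in> carrier G"
  shows "cmt G (cmt G x y) z = x \<otimes> inv (z \<otimes> cmt G (cmt G (inv z) (inv x)) y \<otimes> inv z
            \<otimes> (y \<otimes> cmt G (cmt G (inv y) z) (inv x) \<otimes> inv y)) \<otimes> inv x"
  by (simp add: cmt_def gsimps)


lemma comm_sub_alt: "comm_sub G A B = generate G {cmt G a b | a b. a \<in> A \<and> b \<in> B}"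
  by (simp add: comm_sub_def cmt_def)

lemma comm_in: "a \<in> A \<Longrightarrow> b \<in> B \<Longrightarrow> cmt G a b \<in> comm_sub G A B"
  unfolding comm_sub_alt by (rule generate.incl) blast

lemma comm_sub_subgroup: "A \<subseteq> carrier G \<Longrightarrow> B \<subseteq> carrier G \<Longrightarrow> subgroup (comm_sub G A B) G"
  unfolding comm_sub_alt by (rule generate_is_subgroup) (force intro: cmt_closed)

lemma comm_sub_mono: "A \<subseteq> A' \<Longrightarrow> B \<subseteq> B' \<Longrightarrow> comm_sub G A B \<subseteq> comm_sub G A' B'"
  unfolding comm_sub_alt by (rule mono_generate) blast

lemma comm_sub_into:
  assumes "subgroup N G" "\<And>a b. a \<in> A \<Longrightarrow> b \<in> B \<Longrightarrow> cmt G a b \<in> N"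
  shows "comm_sub G A B \<subseteq> N"
  unfolding comm_sub_alt by (rule generate_subgroup_incl) (use assms in auto)

lemma comm_sub_le: "subgroup S G \<Longrightarrow> A \<subseteq> S \<Longrightarrow> B \<subseteq> S \<Longrightarrow> comm_sub G A B \<subseteq> S"
  by (rule comm_sub_into) (auto simp: cmt_def intro!: subgroup.m_closed subgroup.m_inv_closed)

lemma cmt_inv: "a \<in> carrier G \<Longrightarrow> b \<in> carrier G \<Longrightarrow> cmt G a b = inv (cmt G b a)"
  by (simp add: cmt_def gsimps)

lemma comm_sub_sym: "A \<subseteq> carrier G \<Longrightarrow> B \<subseteq> carrier G \<Longrightarrow> comm_sub G A B \<subseteq> comm_sub G B A"
proof (rule comm_sub_into)
  assume "A \<subseteq> carrier G" "B \<subseteq> carrier G"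
  then show "subgroup (comm_sub G B A) G" by (rule comm_sub_subgroup[rotated])
  fix a b assume "a \<in> A" "b \<in> B"
  then show "cmt G a b \<in> comm_sub G B A"
  proof -
    have "a \<in> carrier G" "b \<in> carrier G" using \<open>a \<in> A\<close> \<open>b \<in> B\<close> \<open>A \<subseteq> carrier G\<close> \<open>B \<subseteq> carrier G\<close> by auto
    then have e: "cmt G a b = inv (cmt G b a)" by (rule cmt_inv)
    have "cmt G b a \<in> comm_sub G B A" using \<open>a \<in> A\<close> \<open>b \<in> B\<close> by (rule comm_in[rotated])
    then show ?thesis unfolding e using subgroup.m_inv_closed[OF comm_sub_subgroup[of B A]]
      \<open>A \<subseteq> carrier G\<close> \<open>B \<subseteq> carrier G\<close> by blast
  qed
qed

lemma comm_sub_sym_eq: "A \<subseteq> carrier G \<Longrightarrow> B \<subseteq> carrier G \<Longrightarrow> comm_sub G A B = comm_sub G B A"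
  by (simp add: comm_sub_sym subset_antisym)

subsection \<open>Lower central series\<close>

lemma lc_Suc2: "lower_central G S (Suc (Suc k)) = comm_sub G S (lower_central G S (Suc k))"
  by simp

lemma lc_basic_Suc: "subgroup S G \<Longrightarrow> subgroup (lower_central G S (Suc j)) G \<and> lower_central G S (Suc j) \<subseteq> S"
proof (induction j)
  case (Suc k)
  have "comm_sub G S (lower_central G S (Suc k)) \<subseteq> S"
    using Suc by (intro comm_sub_le) auto
  moreover have "subgroup (comm_sub G S (lower_central G S (Suc k))) G"
    using Suc subgroup.subset by (intro comm_sub_subgroup) blast+
  ultimately show ?case by simp
qed auto

lemma lc_basic: "subgroup S G \<Longrightarrow> subgroup (lower_central G S j) G \<and> lower_central G S j \<subseteq> S"
  using lc_basic_Suc by (cases j) auto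

lemma lc_subgroup: "subgroup S G \<Longrightarrow> subgroup (lower_central G S j) G"
  using lc_basic by blast

lemma lc_sub: "subgroup S G \<Longrightarrow> lower_central G S j \<subseteq> S"
  using lc_basic by blast

lemma lc_carrier: "subgroup S G \<Longrightarrow> lower_central G S j \<subseteq> carrier G"
  using lc_sub subgroup.subset by blast

lemma lc_decr: "subgroup S G \<Longrightarrow> lower_central G S (Suc (Suc j)) \<subseteq> lower_central G S (Suc j)"
proof (induction j)
  case 0 then show ?case using lc_sub[of S "Suc (Suc 0)"] by simp
next
  case (Suc j)
  then show ?case by (simp del: lower_central.simps(3) add: lc_Suc2 comm_sub_mono)
qed

lemma lc_anti: "subgroup S G \<Longrightarrow> 1 \<le> i \<Longrightarrow> i \<le> j \<Longrightarrow> lower_central G S j \<subseteq> lower_central G S i"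
proof (induction j)
  case (Suc j)
  show ?case
  proof (cases "i = Suc j")
    case False
    then have "i \<le> j" "1 \<le> j" using Suc by auto
    then obtain j' where "j = Suc j'" by (cases j) auto
    then show ?thesis using Suc lc_decr[of S j'] \<open>i \<le> j\<close> by auto
  qed simp
qed simp

lemma lc_mono: "S \<subseteq> T \<Longrightarrow> lower_central G S j \<subseteq> lower_central G T j"
proof (induction j rule: nat_less_induct)
  case (1 j)
  then show ?case
  proof (cases j)
    case (Suc j')
    then show ?thesis using 1 by (cases j') (auto simp del: lower_central.simps(3) simp: lc_Suc2 comm_sub_mono)
  qed simp
qed

lemma lc_one: "lower_central G S (Suc 0) = S" by simp

lemma lc_Suc: "1 \<le> j \<Longrightarrow> lower_central G S (Suc j) = comm_sub G S (lower_central G S j)"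
  by (cases j) auto


subsection \<open>Invariance under endomorphisms\<close>

lemma conj_hom: "g \<in> carrier G \<Longrightarrow> (\<lambda>x. g \<otimes> x \<otimes> inv g) \<in> hom G G"
  by (rule homI) (simp_all add: gsimps)

lemma hom_comm_sub:
  assumes f: "f \<in> hom G G" and A: "A \<subseteq> carrier G" and B: "B \<subseteq> carrier G"
  shows "f ` comm_sub G A B = comm_sub G (f ` A) (f ` B)"
proof -
  have gh: "group_hom G G f" using f by (simp add: group_hom_def group_hom_axioms_def is_group)
  let ?X = "{cmt G a b | a b. a \<in> A \<and> b \<in> B}"
  have X: "?X \<subseteq> carrier G"
  proof
    fix x assume "x \<in> ?X"
    then obtain a b where "x = cmt G a b" "a \<in> A" "b \<in> B" by blast
    then show "x \<in> carrier G" using A B cmt_closed by blast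
  qed
  have e: "f (cmt G a b) = cmt G (f a) (f b)" if "a \<in> carrier G" "b \<in> carrier G" for a b
    using that f by (simp add: cmt_def hom_mult group_hom.hom_inv[OF gh])
  have "f ` ?X = {cmt G a b | a b. a \<in> f ` A \<and> b \<in> f ` B}"
  proof (intro equalityI subsetI)
    fix y assume "y \<in> f ` ?X"
    then obtain a b where ab: "a \<in> A" "b \<in> B" "y = f (cmt G a b)" by blast
    then have "y = cmt G (f a) (f b)" using e[of a b] A B by auto
    then show "y \<in> {cmt G a b | a b. a \<in> f ` A \<and> b \<in> f ` B}" using ab by blast
  next
    fix y assume "y \<in> {cmt G a b | a b. a \<in> f ` A \<and> b \<in> f ` B}"
    then obtain a b where ab: "a \<in> A" "b \<in> B" "y = cmt G (f a) (f b)" by blast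
    moreover have "a \<in> carrier G" "b \<in> carrier G" using ab A B by auto
    ultimately have "y = f (cmt G a b)" using e[of a b] by simp
    moreover have "cmt G a b \<in> ?X" using ab by blast
    ultimately show "y \<in> f ` ?X" by blast
  qed
  then show ?thesis unfolding comm_sub_alt using group_hom.generate_img[OF gh X] by simp
qed

lemma hom_lc:
  assumes f: "f \<in> hom G G" and S: "subgroup S G"
  shows "f ` lower_central G S j \<subseteq> lower_central G (f ` S) j"
proof (induction j rule: nat_less_induct)
  case (1 j)
  show ?case
  proof (cases j)
    case (Suc j')
    show ?thesis
    proof (cases j')
      case (Suc k)
      have "f ` lower_central G S j = comm_sub G (f ` S) (f ` lower_central G S (Suc k))"
        using Suc \<open>j = Suc j'\<close> hom_comm_sub[OF f subgroup.subset[OF S] lc_carrier[OF S]] by simp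
      also have "\<dots> \<subseteq> comm_sub G (f ` S) (lower_central G (f ` S) (Suc k))"
        using 1 Suc \<open>j = Suc j'\<close> by (intro comm_sub_mono) auto
      finally show ?thesis using Suc \<open>j = Suc j'\<close> by simp
    qed (simp add: Suc)
  qed simp
qed

lemma lc_invariant:
  assumes "f \<in> hom G G" "subgroup S G" "f ` S \<subseteq> S"
  shows "f ` lower_central G S j \<subseteq> lower_central G S j"
  using hom_lc[OF assms(1,2)] lc_mono[OF assms(3)] by blast

lemma lc_conj:
  assumes S: "subgroup S G" and g: "g \<in> carrier G" and inv: "\<And>s. s \<in> S \<Longrightarrow> g \<otimes> s \<otimes> inv g \<in> S"
    and m: "m \<in> lower_central G S j"
  shows "g \<otimes> m \<otimes> inv g \<in> lower_central G S j"
  using lc_invariant[OF conj_hom[OF g] S] inv m by blast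

lemma lc_conj_self:
  assumes S: "subgroup S G" and g: "g \<in> S" and m: "m \<in> lower_central G S j"
  shows "g \<otimes> m \<otimes> inv g \<in> lower_central G S j"
  using S g m by (intro lc_conj) (auto intro!: subgroup.m_closed subgroup.m_inv_closed simp: subgroup.mem_carrier)

subsection \<open>Three subgroups lemma\<close>

lemma three_subgroups:
  assumes M: "subgroup M G" and A: "subgroup A G" and B: "subgroup B G" and C: "subgroup C G"
    and AM: "A \<subseteq> M" and BM: "B \<subseteq> M" and CM: "C \<subseteq> M"
    and N: "subgroup N G" and nrm: "\<And>g m. g \<in> M \<Longrightarrow> m \<in> N \<Longrightarrow> g \<otimes> m \<otimes> inv g \<in> N"
    and h1: "\<And>x y z. x \<in> A \<Longrightarrow> y \<in> B \<Longrightarrow> z \<in> C \<Longrightarrow> cmt G (cmt G y z) x \<in> N"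
    and h2: "\<And>x y z. x \<in> A \<Longrightarrow> y \<in> B \<Longrightarrow> z \<in> C \<Longrightarrow> cmt G (cmt G z x) y \<in> N"
  shows "comm_sub G (comm_sub G A B) C \<subseteq> N"
proof -
  have cA: "x \<in> carrier G" if "x \<in> A" for x by (rule subgroup.mem_carrier[OF A that])
  have cB: "x \<in> carrier G" if "x \<in> B" for x by (rule subgroup.mem_carrier[OF B that])
  have cC: "x \<in> carrier G" if "x \<in> C" for x by (rule subgroup.mem_carrier[OF C that])
  have cM: "x \<in> carrier G" if "x \<in> M" for x by (rule subgroup.mem_carrier[OF M that])
  have basic: "cmt G (cmt G x y) z \<in> N" if x: "x \<in> A" and y: "y \<in> B" and z: "z \<in> C" for x y z
  proof -
    have ix: "inv x \<in> A" by (rule subgroup.m_inv_closed[OF A x])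
    have iy: "inv y \<in> B" by (rule subgroup.m_inv_closed[OF B y])
    have iz: "inv z \<in> C" by (rule subgroup.m_inv_closed[OF C z])
    have t3: "cmt G (cmt G (inv z) (inv x)) y \<in> N" using h2[OF ix y iz] .
    have t2: "cmt G (cmt G (inv y) z) (inv x) \<in> N" using h1[OF ix iy z] .
    have zN: "z \<otimes> cmt G (cmt G (inv z) (inv x)) y \<otimes> inv z \<in> N" by (rule nrm[OF subsetD[OF CM z] t3])
    have yN: "y \<otimes> cmt G (cmt G (inv y) z) (inv x) \<otimes> inv y \<in> N" by (rule nrm[OF subsetD[OF BM y] t2])
    have "inv (z \<otimes> cmt G (cmt G (inv z) (inv x)) y \<otimes> inv z
            \<otimes> (y \<otimes> cmt G (cmt G (inv y) z) (inv x) \<otimes> inv y)) \<in> N"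
      by (rule subgroup.m_inv_closed[OF N subgroup.m_closed[OF N zN yN]])
    then have "x \<otimes> inv (z \<otimes> cmt G (cmt G (inv z) (inv x)) y \<otimes> inv z
            \<otimes> (y \<otimes> cmt G (cmt G (inv y) z) (inv x) \<otimes> inv y)) \<otimes> inv x \<in> N"
      by (rule nrm[OF subsetD[OF AM x]])
    then show ?thesis using hall_witt[OF cA[OF x] cB[OF y] cC[OF z]] by simp
  qed
  have cmtM: "cmt G a b \<in> M" if "a \<in> M" "b \<in> M" for a b
    unfolding cmt_def using that
    by (intro subgroup.m_closed[OF M] subgroup.m_inv_closed[OF M]) 
  let ?X = "{cmt G a b | a b. a \<in> A \<and> b \<in> B}"
  have MX: "\<And>g. g \<in> generate G ?X \<Longrightarrow> g \<in> M \<and> (\<forall>z \<in> C. cmt G g z \<in> N)"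
  proof -
    fix g assume "g \<in> generate G ?X"
    then show "g \<in> M \<and> (\<forall>z \<in> C. cmt G g z \<in> N)"
    proof (induction rule: generate.induct)
      case one
      have "cmt G \<one> z = \<one>" if "z \<in> C" for z using cC[OF that] by (simp add: cmt_def)
      then show ?case using subgroup.one_closed[OF M] subgroup.one_closed[OF N] by simp
    next
      case (incl h)
      then obtain a b where h: "h = cmt G a b" "a \<in> A" "b \<in> B" by blast
      have "h \<in> M" unfolding h(1) by (rule cmtM[OF subsetD[OF AM h(2)] subsetD[OF BM h(3)]])
      then show ?case using basic[OF h(2) h(3)] h(1) by blast
    next
      case (inv h)
      then obtain a b where h: "h = cmt G a b" "a \<in> A" "b \<in> B" by blast
      have hM: "h \<in> M" unfolding h(1) by (rule cmtM[OF subsetD[OF AM h(2)] subsetD[OF BM h(3)]])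
      have hc: "h \<in> carrier G" by (rule cM[OF hM])
      have ihM: "inv h \<in> M" by (rule subgroup.m_inv_closed[OF M hM])
      have "cmt G (inv h) z \<in> N" if z: "z \<in> C" for z
      proof -
        have "cmt G h z \<in> N" unfolding h(1) by (rule basic[OF h(2) h(3) z])
        then have "inv (cmt G h z) \<in> N" by (rule subgroup.m_inv_closed[OF N])
        then have "inv h \<otimes> inv (cmt G h z) \<otimes> inv (inv h) \<in> N" by (rule nrm[OF ihM])
        moreover have "inv h \<otimes> inv (cmt G h z) \<otimes> inv (inv h) = cmt G (inv h) z"
          using hc cC[OF z] by (simp add: cmt_def gsimps)
        ultimately show ?thesis by simp
      qed
      then show ?case using ihM by blast
    next
      case (eng g h)
      have gM: "g \<in> M" and hM: "h \<in> M" using eng.IH by auto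
      have gc: "g \<in> carrier G" by (rule cM[OF gM])
      have hc: "h \<in> carrier G" by (rule cM[OF hM])
      have "cmt G (g \<otimes> h) z \<in> N" if z: "z \<in> C" for z
      proof -
        have e1: "cmt G h z \<in> N" "cmt G g z \<in> N" using eng.IH z by auto
        have "g \<otimes> cmt G h z \<otimes> inv g \<in> N" by (rule nrm[OF gM e1(1)])
        then have "g \<otimes> cmt G h z \<otimes> inv g \<otimes> cmt G g z \<in> N" by (rule subgroup.m_closed[OF N _ e1(2)])
        moreover have "g \<otimes> cmt G h z \<otimes> inv g \<otimes> cmt G g z = cmt G (g \<otimes> h) z"
          using gc hc cC[OF z] by (simp add: cmt_def gsimps)
        ultimately show ?thesis by simp
      qed
      then show ?case using subgroup.m_closed[OF M gM hM] by blast
    qed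
  qed
  show ?thesis
  proof (rule comm_sub_into[OF N])
    fix a b assume "a \<in> comm_sub G A B" "b \<in> C"
    then show "cmt G a b \<in> N" using MX unfolding comm_sub_alt by blast
  qed
qed


subsection \<open>Lower central series is an N-series\<close>

lemma cmt_swap_mem:
  assumes N: "subgroup N G" and a: "a \<in> carrier G" and b: "b \<in> carrier G" and m: "cmt G a b \<in> N"
  shows "cmt G b a \<in> N"
  using subgroup.m_inv_closed[OF N m] cmt_inv[OF b a] by simp

lemma lc_cmt:
  assumes S: "subgroup S G" and j: "1 \<le> j" and x: "x \<in> S" and w: "w \<in> lower_central G S j"
  shows "cmt G x w \<in> lower_central G S (Suc j)" "cmt G w x \<in> lower_central G S (Suc j)"
proof -
  show 1: "cmt G x w \<in> lower_central G S (Suc j)"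
    using comm_in[OF x w] lc_Suc[OF j] by simp
  show "cmt G w x \<in> lower_central G S (Suc j)"
    by (rule cmt_swap_mem[OF lc_subgroup[OF S] subgroup.mem_carrier[OF S x] subsetD[OF lc_carrier[OF S] w] 1])
qed

lemma lc_nseries_Suc:
  assumes S: "subgroup S G"
  shows "\<forall>l a b. 1 \<le> l \<longrightarrow> a \<in> lower_central G S (Suc i) \<longrightarrow> b \<in> lower_central G S l
         \<longrightarrow> cmt G a b \<in> lower_central G S (Suc i + l)"
proof (induction i)
  case 0
  show ?case using lc_cmt(1)[OF S] by simp
next
  case (Suc i)
  have Sc: "S \<subseteq> carrier G" by (rule subgroup.subset[OF S])
  show ?case
  proof (intro allI impI)
    fix l a b assume l: "1 \<le> l" and a: "a \<in> lower_central G S (Suc (Suc i))" and b: "b \<in> lower_central G S l"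
    let ?N = "lower_central G S (Suc (Suc i) + l)"
    have "comm_sub G (comm_sub G S (lower_central G S (Suc i))) (lower_central G S l) \<subseteq> ?N"
    proof (rule three_subgroups[OF S S lc_subgroup[OF S] lc_subgroup[OF S] subset_refl lc_sub[OF S] lc_sub[OF S] lc_subgroup[OF S]])
      fix g m assume "g \<in> S" "m \<in> ?N" then show "g \<otimes> m \<otimes> inv g \<in> ?N" by (rule lc_conj_self[OF S])
    next
      fix x y z assume x: "x \<in> S" and y: "y \<in> lower_central G S (Suc i)" and z: "z \<in> lower_central G S l"
      have "cmt G y z \<in> lower_central G S (Suc i + l)" using Suc.IH l y z by blast
      from lc_cmt(2)[OF S _ x this] show "cmt G (cmt G y z) x \<in> ?N" by simp
    next
      fix x y z assume x: "x \<in> S" and y: "y \<in> lower_central G S (Suc i)" and z: "z \<in> lower_central G S l"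
      have w: "cmt G z x \<in> lower_central G S (Suc l)" by (rule lc_cmt(2)[OF S l x z])
      have "cmt G y (cmt G z x) \<in> lower_central G S (Suc i + Suc l)" using Suc.IH[rule_format, of "Suc l" y "cmt G z x"] y w by simp
      moreover have "Suc i + Suc l = Suc (Suc i) + l" by simp
      ultimately have "cmt G y (cmt G z x) \<in> ?N" by metis
      then show "cmt G (cmt G z x) y \<in> ?N"
        by (rule cmt_swap_mem[OF lc_subgroup[OF S] subsetD[OF lc_carrier[OF S] y] subsetD[OF lc_carrier[OF S] w]])
    qed
    moreover have "cmt G a b \<in> comm_sub G (comm_sub G S (lower_central G S (Suc i))) (lower_central G S l)"
      using comm_in[OF _ b, of a] a by simp
    ultimately show "cmt G a b \<in> ?N" by blast
  qed
qed

lemma lc_nseries: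
  assumes S: "subgroup S G" and "1 \<le> i" "1 \<le> l" "a \<in> lower_central G S i" "b \<in> lower_central G S l"
  shows "cmt G a b \<in> lower_central G S (i + l)"
proof -
  obtain i' where "i = Suc i'" using assms(2) by (cases i) auto
  then show ?thesis using lc_nseries_Suc[OF S, of i'] assms by blast
qed

end

locale adp = group G for G (structure) +
  fixes H K
  assumes H: "subgroup H G" and K: "subgroup K G"
    and nrmK: "\<And>k h. k \<in> K \<Longrightarrow> h \<in> H \<Longrightarrow> k \<otimes> h \<otimes> inv k \<in> H"
    and ad: "\<And>k h. k \<in> K \<Longrightarrow> h \<in> H \<Longrightarrow> cmt G k h \<in> lower_central G H 2"
begin

lemma Hc: "h \<in> H \<Longrightarrow> h \<in> carrier G" by (rule subgroup.mem_carrier[OF H])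
lemma Kc: "k \<in> K \<Longrightarrow> k \<in> carrier G" by (rule subgroup.mem_carrier[OF K])

lemma mem_HK: "g \<in> H <#> K \<longleftrightarrow> (\<exists>h\<in>H. \<exists>k\<in>K. g = h \<otimes> k)"
  unfolding set_mult_def by blast

lemma HK_sub: "subgroup (H <#> K) G"
proof (rule subgroup.intro)
  show "H <#> K \<subseteq> carrier G" using Hc Kc by (auto simp: mem_HK)
next
  fix x y assume "x \<in> H <#> K" "y \<in> H <#> K"
  then obtain h1 k1 h2 k2 where x: "h1 \<in> H" "k1 \<in> K" "x = h1 \<otimes> k1" and y: "h2 \<in> H" "k2 \<in> K" "y = h2 \<otimes> k2"
    by (auto simp: mem_HK)
  have "x \<otimes> y = (h1 \<otimes> (k1 \<otimes> h2 \<otimes> inv k1)) \<otimes> (k1 \<otimes> k2)"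
    using x y Hc Kc by (simp add: gsimps)
  moreover have "h1 \<otimes> (k1 \<otimes> h2 \<otimes> inv k1) \<in> H" by (rule subgroup.m_closed[OF H x(1) nrmK[OF x(2) y(1)]])
  moreover have "k1 \<otimes> k2 \<in> K" by (rule subgroup.m_closed[OF K x(2) y(2)])
  ultimately show "x \<otimes> y \<in> H <#> K" by (auto simp: mem_HK)
next
  have "\<one> = \<one> \<otimes> \<one>" by simp
  then show "\<one> \<in> H <#> K" using subgroup.one_closed[OF H] subgroup.one_closed[OF K] mem_HK by blast
next
  fix x assume "x \<in> H <#> K"
  then obtain h k where x: "h \<in> H" "k \<in> K" "x = h \<otimes> k" by (auto simp: mem_HK)
  have ik: "inv k \<in> K" by (rule subgroup.m_inv_closed[OF K x(2)])
  have ih: "inv h \<in> H" by (rule subgroup.m_inv_closed[OF H x(1)])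
  have "inv x = (inv k \<otimes> inv h \<otimes> inv (inv k)) \<otimes> inv k"
    using x Hc Kc by (simp add: gsimps)
  moreover have "inv k \<otimes> inv h \<otimes> inv (inv k) \<in> H" by (rule nrmK[OF ik ih])
  ultimately show "inv x \<in> H <#> K" using ik by (auto simp: mem_HK)
qed

lemma H_HK: "H \<subseteq> H <#> K"
proof
  fix h assume "h \<in> H"
  then have "h = h \<otimes> \<one>" using Hc by simp
  then show "h \<in> H <#> K" using \<open>h \<in> H\<close> subgroup.one_closed[OF K] mem_HK by blast
qed

lemma K_HK: "K \<subseteq> H <#> K"
proof
  fix k assume "k \<in> K"
  then have "k = \<one> \<otimes> k" using Kc by simp
  then show "k \<in> H <#> K" using \<open>k \<in> K\<close> subgroup.one_closed[OF H] mem_HK by blast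
qed

lemma HK_conj:
  assumes g: "g \<in> H <#> K" and m: "m \<in> lower_central G H j"
  shows "g \<otimes> m \<otimes> inv g \<in> lower_central G H j"
proof -
  obtain h k where g: "h \<in> H" "k \<in> K" "g = h \<otimes> k" using g by (auto simp: mem_HK)
  have mc: "m \<in> carrier G" using m lc_carrier[OF H] by blast
  have "k \<otimes> m \<otimes> inv k \<in> lower_central G H j"
    by (rule lc_conj[OF H Kc[OF g(2)] nrmK[OF g(2)] m])
  then have "h \<otimes> (k \<otimes> m \<otimes> inv k) \<otimes> inv h \<in> lower_central G H j"
    by (rule lc_conj_self[OF H g(1)])
  moreover have "h \<otimes> (k \<otimes> m \<otimes> inv k) \<otimes> inv h = g \<otimes> m \<otimes> inv g"
    using g Hc Kc mc by (simp add: gsimps)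
  ultimately show ?thesis by simp
qed

lemma F4_Suc: "\<forall>k x. k \<in> K \<longrightarrow> x \<in> lower_central G H (Suc m) \<longrightarrow> cmt G k x \<in> lower_central G H (Suc (Suc m))"
proof (induction m)
  case 0
  then show ?case using ad by (simp add: numeral_2_eq_2)
next
  case (Suc m)
  let ?N = "lower_central G H (Suc (Suc (Suc m)))"
  have "comm_sub G (comm_sub G H (lower_central G H (Suc m))) K \<subseteq> ?N"
  proof (rule three_subgroups[OF HK_sub H lc_subgroup[OF H] K H_HK _ K_HK lc_subgroup[OF H]])
    show "lower_central G H (Suc m) \<subseteq> H <#> K" using lc_sub[OF H] H_HK by blast
  next
    fix g m' assume "g \<in> H <#> K" "m' \<in> ?N" then show "g \<otimes> m' \<otimes> inv g \<in> ?N" by (rule HK_conj)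
  next
    fix x y z assume x: "x \<in> H" and y: "y \<in> lower_central G H (Suc m)" and z: "z \<in> K"
    have yc: "y \<in> carrier G" using y lc_carrier[OF H] by blast
    have "cmt G z y \<in> lower_central G H (Suc (Suc m))" using Suc.IH z y by blast
    then have "cmt G y z \<in> lower_central G H (Suc (Suc m))"
      by (rule cmt_swap_mem[OF lc_subgroup[OF H] Kc[OF z] yc])
    from lc_cmt(2)[OF H _ x this] show "cmt G (cmt G y z) x \<in> ?N" by simp
  next
    fix x y z assume x: "x \<in> H" and y: "y \<in> lower_central G H (Suc m)" and z: "z \<in> K"
    have "cmt G z x \<in> lower_central G H 2" by (rule ad[OF z x])
    from lc_nseries[OF H _ _ this y] show "cmt G (cmt G z x) y \<in> ?N" by simp
  qed
  show ?case
  proof (intro allI impI)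
    fix k x assume k: "k \<in> K" and x: "x \<in> lower_central G H (Suc (Suc m))"
    have xc: "x \<in> carrier G" using x lc_carrier[OF H] by blast
    have "cmt G x k \<in> comm_sub G (comm_sub G H (lower_central G H (Suc m))) K"
      using comm_in[OF _ k, of x] x by simp
    then have "cmt G x k \<in> ?N" using \<open>comm_sub G _ K \<subseteq> ?N\<close> by blast
    then show "cmt G k x \<in> ?N" by (rule cmt_swap_mem[OF lc_subgroup[OF H] xc Kc[OF k]])
  qed
qed

lemma F4: "1 \<le> m \<Longrightarrow> k \<in> K \<Longrightarrow> x \<in> lower_central G H m \<Longrightarrow> cmt G k x \<in> lower_central G H (Suc m)"
  using F4_Suc[of "m - 1"] by (cases m) auto

end

context group begin

end

context adp begin

lemma claim_Suc:
  "\<forall>l k x. 1 \<le> l \<longrightarrow> k \<in> lower_central G K (Suc i) \<longrightarrow> x \<in> lower_central G H l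
     \<longrightarrow> cmt G k x \<in> lower_central G H (Suc i + l)"
proof (induction i)
  case 0
  show ?case using F4 by simp
next
  case (Suc i)
  show ?case
  proof (intro allI impI)
    fix l k x assume l: "1 \<le> l" and k: "k \<in> lower_central G K (Suc (Suc i))" and x: "x \<in> lower_central G H l"
    let ?N = "lower_central G H (Suc (Suc i) + l)"
    have "comm_sub G (comm_sub G K (lower_central G K (Suc i))) (lower_central G H l) \<subseteq> ?N"
    proof (rule three_subgroups[OF HK_sub K lc_subgroup[OF K] lc_subgroup[OF H] K_HK _ _ lc_subgroup[OF H]])
      show "lower_central G K (Suc i) \<subseteq> H <#> K" using lc_sub[OF K] K_HK by blast
      show "lower_central G H l \<subseteq> H <#> K" using lc_sub[OF H] H_HK by blast
    next
      fix g m' assume "g \<in> H <#> K" "m' \<in> ?N" then show "g \<otimes> m' \<otimes> inv g \<in> ?N" by (rule HK_conj)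
    next
      fix a y z assume a: "a \<in> K" and y: "y \<in> lower_central G K (Suc i)" and z: "z \<in> lower_central G H l"
      have yc: "y \<in> carrier G" using y lc_carrier[OF K] by blast
      have zc: "z \<in> carrier G" using z lc_carrier[OF H] by blast
      have w: "cmt G y z \<in> lower_central G H (Suc i + l)" using Suc.IH l y z by blast
      have "cmt G a (cmt G y z) \<in> lower_central G H (Suc (Suc i + l))" by (rule F4[OF _ a w]) simp
      then have "cmt G (cmt G y z) a \<in> lower_central G H (Suc (Suc i + l))"
        by (rule cmt_swap_mem[OF lc_subgroup[OF H] Kc[OF a] cmt_closed[OF yc zc]])
      then show "cmt G (cmt G y z) a \<in> ?N" by simp
    next
      fix a y z assume a: "a \<in> K" and y: "y \<in> lower_central G K (Suc i)" and z: "z \<in> lower_central G H l"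
      have yc: "y \<in> carrier G" using y lc_carrier[OF K] by blast
      have zc: "z \<in> carrier G" using z lc_carrier[OF H] by blast
      have "cmt G a z \<in> lower_central G H (Suc l)" by (rule F4[OF l a z])
      then have w: "cmt G z a \<in> lower_central G H (Suc l)"
        by (rule cmt_swap_mem[OF lc_subgroup[OF H] Kc[OF a] zc])
      have "cmt G y (cmt G z a) \<in> lower_central G H (Suc i + Suc l)"
        using Suc.IH[rule_format, of "Suc l" y "cmt G z a"] y w by simp
      then have "cmt G (cmt G z a) y \<in> lower_central G H (Suc i + Suc l)"
        by (rule cmt_swap_mem[OF lc_subgroup[OF H] yc cmt_closed[OF zc Kc[OF a]]])
      then show "cmt G (cmt G z a) y \<in> ?N" by simp
    qed
    moreover have "cmt G k x \<in> comm_sub G (comm_sub G K (lower_central G K (Suc i))) (lower_central G H l)"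
      using comm_in[OF _ x, of k] k by simp
    ultimately show "cmt G k x \<in> ?N" by blast
  qed
qed

lemma claim:
  assumes "1 \<le> i" "1 \<le> l" "k \<in> lower_central G K i" "x \<in> lower_central G H l"
  shows "cmt G k x \<in> lower_central G H (i + l)"
proof -
  obtain i' where "i = Suc i'" using assms(1) by (cases i) auto
  then show ?thesis using claim_Suc[of i'] assms by blast
qed

lemma claim_sw:
  assumes "1 \<le> i" "k \<in> lower_central G K i" "x \<in> H"
  shows "cmt G x k \<in> lower_central G H (Suc i)"
proof -
  have "x \<in> lower_central G H (Suc 0)" using assms(3) by simp
  from claim[OF assms(1) _ assms(2) this] have "cmt G k x \<in> lower_central G H (Suc i)" by simp
  then show ?thesis
    by (rule cmt_swap_mem[OF lc_subgroup[OF H] subsetD[OF lc_carrier[OF K] assms(2)] Hc[OF assms(3)]])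
qed

lemma HK_cmt:
  assumes j: "1 \<le> j" and g: "g \<in> H <#> K" and x: "x \<in> lower_central G H j"
  shows "cmt G g x \<in> lower_central G H (Suc j)"
proof -
  obtain h k where g: "h \<in> H" "k \<in> K" "g = h \<otimes> k" using g by (auto simp: mem_HK)
  have xc: "x \<in> carrier G" using x lc_carrier[OF H] by blast
  have "h \<otimes> cmt G k x \<otimes> inv h \<in> lower_central G H (Suc j)"
    by (rule lc_conj_self[OF H g(1) F4[OF j g(2) x]])
  moreover have "cmt G h x \<in> lower_central G H (Suc j)" by (rule lc_cmt(1)[OF H j g(1) x])
  ultimately have "h \<otimes> cmt G k x \<otimes> inv h \<otimes> cmt G h x \<in> lower_central G H (Suc j)"
    by (rule subgroup.m_closed[OF lc_subgroup[OF H]])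
  moreover have "h \<otimes> cmt G k x \<otimes> inv h \<otimes> cmt G h x = cmt G g x"
    using g Hc Kc xc by (simp add: cmt_def gsimps)
  ultimately show ?thesis by simp
qed

lemma key_identity:
  assumes [simp]: "h \<in> carrier G" "k \<in> carrier G" "h' \<in> carrier G" "k' \<in> carrier G"
  shows "cmt G (h \<otimes> k) (h' \<otimes> k') = cmt G (h \<otimes> k) h' \<otimes> ((h' \<otimes> cmt G h (cmt G k k') \<otimes> inv h')
           \<otimes> (cmt G h' (cmt G k k') \<otimes> cmt G k k') \<otimes> (h' \<otimes> cmt G h k' \<otimes> inv h'))"
  by (simp add: cmt_def gsimps)

lemma P:
  assumes j: "1 \<le> j" and g: "g \<in> H <#> K" and h': "h' \<in> lower_central G H j"
    and k': "k' \<in> lower_central G K j" and Q: "subgroup Q G"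
    and QH: "lower_central G H (Suc j) \<subseteq> Q" and QK: "lower_central G K (Suc j) \<subseteq> Q"
  shows "cmt G g (h' \<otimes> k') \<in> Q"
proof -
  obtain h k where g: "h \<in> H" "k \<in> K" "g = h \<otimes> k" using g by (auto simp: mem_HK)
  have h'H: "h' \<in> H" using h' lc_sub[OF H] by blast
  have k'K: "k' \<in> K" using k' lc_sub[OF K] by blast
  have k'c: "k' \<in> carrier G" using Kc k'K by blast
  have h'c: "h' \<in> carrier G" using Hc h'H by blast
  let ?l = "cmt G k k'"
  have l: "?l \<in> lower_central G K (Suc j)" by (rule lc_cmt(1)[OF K j g(2) k'])
  have l2: "?l \<in> lower_central G K (Suc j)" by (rule l)
  have NN: "lower_central G H (Suc (Suc j)) \<subseteq> lower_central G H (Suc j)" by (rule lc_decr[OF H])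
  have t1: "cmt G (h \<otimes> k) h' \<in> Q" using HK_cmt[OF j _ h'] g QH by (auto simp: mem_HK)
  have t2: "h' \<otimes> cmt G h ?l \<otimes> inv h' \<in> Q"
  proof -
    have "cmt G h ?l \<in> lower_central G H (Suc (Suc j))" by (rule claim_sw[OF _ l g(1)]) simp
    then have "cmt G h ?l \<in> lower_central G H (Suc j)" using NN by blast
    then show ?thesis using lc_conj_self[OF H h'H] QH by blast
  qed
  have t3: "cmt G h' ?l \<in> Q"
  proof -
    have "cmt G h' ?l \<in> lower_central G H (Suc (Suc j))" by (rule claim_sw[OF _ l h'H]) simp
    then show ?thesis using NN QH by blast
  qed
  have t4: "?l \<in> Q" using l QK by blast
  have t5: "h' \<otimes> cmt G h k' \<otimes> inv h' \<in> Q"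
  proof -
    have "cmt G h k' \<in> lower_central G H (Suc j)" by (rule claim_sw[OF j k' g(1)])
    then show ?thesis using lc_conj_self[OF H h'H] QH by blast
  qed
  have "cmt G (h \<otimes> k) h' \<otimes> ((h' \<otimes> cmt G h ?l \<otimes> inv h')
           \<otimes> (cmt G h' ?l \<otimes> ?l) \<otimes> (h' \<otimes> cmt G h k' \<otimes> inv h')) \<in> Q"
    using subgroup.m_closed[OF Q t1 subgroup.m_closed[OF Q subgroup.m_closed[OF Q t2 subgroup.m_closed[OF Q t3 t4]] t5]] .
  then show ?thesis using key_identity[OF Hc[OF g(1)] Kc[OF g(2)] h'c k'c] g(3) by simp
qed

end


lemma group_AutF: "group (AutF n)"
  by (rule group.AutoGroup[OF group_free_group])

lemma autF_mult:
  assumes "\<sigma> \<in> carrier (AutF n)" "\<tau> \<in> carrier (AutF n)" "x \<in> carrier (free_group n)"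
  shows "(\<sigma> \<otimes>\<^bsub>AutF n\<^esub> \<tau>) x = \<sigma> (\<tau> x)"
  using assms by (simp add: AutoGroup_def BijGroup_def auto_def compose_def)

lemma autF_one:
  assumes "x \<in> carrier (free_group n)"
  shows "\<one>\<^bsub>AutF n\<^esub> x = x"
  using assms by (simp add: AutoGroup_def BijGroup_def)

lemma autF_closed:
  assumes "\<sigma> \<in> carrier (AutF n)" "x \<in> carrier (free_group n)"
  shows "\<sigma> x \<in> carrier (free_group n)"
  using assms by (auto simp: AutoGroup_def BijGroup_def auto_def hom_def)

lemma andreadakis_subgroup: "subgroup (andreadakis n j) (AutF n)"
proof -
  let ?F = "free_group n" and ?A = "AutF n"
  let ?L = "lower_central ?F (carrier ?F) (Suc j)"
  have gF: "group ?F" by (rule group_free_group)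
  have gA: "group ?A" by (rule group_AutF)
  have Lsub: "subgroup ?L ?F" by (rule group.lc_subgroup[OF gF group.subgroup_self[OF gF]])
  have mem: "\<sigma> \<in> andreadakis n j \<longleftrightarrow> \<sigma> \<in> carrier ?A \<and> (\<forall>x \<in> carrier ?F. \<sigma> x \<otimes>\<^bsub>?F\<^esub> inv\<^bsub>?F\<^esub> x \<in> ?L)" for \<sigma>
    by (simp add: andreadakis_def)
  show ?thesis
  proof (rule group.subgroupI[OF gA])
    show "andreadakis n j \<subseteq> carrier ?A" using mem by blast
  next
    have "\<one>\<^bsub>?A\<^esub> \<in> andreadakis n j"
      unfolding mem using autF_one subgroup.one_closed[OF Lsub]
      by (simp add: group.r_inv[OF gF] monoid.one_closed[OF group.is_monoid[OF gA]])
    then show "andreadakis n j \<noteq> {}" by blast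
  next
    fix a b assume a: "a \<in> andreadakis n j" and b: "b \<in> andreadakis n j"
    have ac: "a \<in> carrier ?A" and bc: "b \<in> carrier ?A" using a b mem by auto
    show "a \<otimes>\<^bsub>?A\<^esub> b \<in> andreadakis n j"
      unfolding mem
    proof (intro conjI ballI)
      show "a \<otimes>\<^bsub>?A\<^esub> b \<in> carrier ?A" by (rule monoid.m_closed[OF group.is_monoid[OF gA] ac bc])
      fix x assume x: "x \<in> carrier ?F"
      have bx: "b x \<in> carrier ?F" by (rule autF_closed[OF bc x])
      have abx: "a (b x) \<in> carrier ?F" by (rule autF_closed[OF ac bx])
      have t1: "a (b x) \<otimes>\<^bsub>?F\<^esub> inv\<^bsub>?F\<^esub> (b x) \<in> ?L" using a mem bx by blast
      have t2: "b x \<otimes>\<^bsub>?F\<^esub> inv\<^bsub>?F\<^esub> x \<in> ?L" using b mem x by blast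
      have "(a (b x) \<otimes>\<^bsub>?F\<^esub> inv\<^bsub>?F\<^esub> (b x)) \<otimes>\<^bsub>?F\<^esub> (b x \<otimes>\<^bsub>?F\<^esub> inv\<^bsub>?F\<^esub> x) \<in> ?L"
        by (rule subgroup.m_closed[OF Lsub t1 t2])
      moreover have "(a (b x) \<otimes>\<^bsub>?F\<^esub> inv\<^bsub>?F\<^esub> (b x)) \<otimes>\<^bsub>?F\<^esub> (b x \<otimes>\<^bsub>?F\<^esub> inv\<^bsub>?F\<^esub> x)
          = a (b x) \<otimes>\<^bsub>?F\<^esub> inv\<^bsub>?F\<^esub> x"
        using x bx abx by (simp add: group.tele[OF gF])
      ultimately show "(a \<otimes>\<^bsub>?A\<^esub> b) x \<otimes>\<^bsub>?F\<^esub> inv\<^bsub>?F\<^esub> x \<in> ?L"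
        using autF_mult[OF ac bc x] by simp
    qed
  next
    fix a assume a: "a \<in> andreadakis n j"
    have ac: "a \<in> carrier ?A" using a mem by auto
    let ?b = "inv\<^bsub>?A\<^esub> a"
    have bc: "?b \<in> carrier ?A" by (rule group.inv_closed[OF gA ac])
    have ab: "a \<otimes>\<^bsub>?A\<^esub> ?b = \<one>\<^bsub>?A\<^esub>" by (rule group.r_inv[OF gA ac])
    show "?b \<in> andreadakis n j"
      unfolding mem
    proof (intro conjI ballI bc)
      fix x assume x: "x \<in> carrier ?F"
      have bx: "?b x \<in> carrier ?F" by (rule autF_closed[OF bc x])
      have abx: "a (?b x) = x" using autF_mult[OF ac bc x] ab autF_one[OF x] by simp
      have t: "a (?b x) \<otimes>\<^bsub>?F\<^esub> inv\<^bsub>?F\<^esub> (?b x) \<in> ?L" using a mem bx by blast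
      have "inv\<^bsub>?F\<^esub> (a (?b x) \<otimes>\<^bsub>?F\<^esub> inv\<^bsub>?F\<^esub> (?b x)) \<in> ?L" by (rule subgroup.m_inv_closed[OF Lsub t])
      moreover have "inv\<^bsub>?F\<^esub> (a (?b x) \<otimes>\<^bsub>?F\<^esub> inv\<^bsub>?F\<^esub> (?b x)) = ?b x \<otimes>\<^bsub>?F\<^esub> inv\<^bsub>?F\<^esub> x"
        using abx x bx by (simp add: group.inv_diff[OF gF])
      ultimately show "?b x \<otimes>\<^bsub>?F\<^esub> inv\<^bsub>?F\<^esub> x \<in> ?L" by simp
    qed
  qed
qed

lemma andreadakis_decr: "andreadakis n (Suc j) \<subseteq> andreadakis n j"
proof -
  have gF: "group (free_group n)" by (rule group_free_group)
  have "lower_central (free_group n) (carrier (free_group n)) (Suc (Suc j))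
        \<subseteq> lower_central (free_group n) (carrier (free_group n)) (Suc j)"
    by (rule group.lc_decr[OF gF group.subgroup_self[OF gF]])
  then show ?thesis unfolding andreadakis_def by blast
qed


theorem mainTheorem6:
  fixes n :: nat and H K :: "(fword \<Rightarrow> fword) set"
  assumes H_sub: "subgroup H (AutF n)" and H_IA: "H \<subseteq> IA n"
      and K_sub: "subgroup K (AutF n)" and K_IA: "K \<subseteq> IA n"
      and triv: "H \<inter> K = {\<one>\<^bsub>AutF n\<^esub>}"
      and normalizes: "\<forall>k \<in> K. (\<lambda>h. k \<otimes>\<^bsub>AutF n\<^esub> h \<otimes>\<^bsub>AutF n\<^esub> inv\<^bsub>AutF n\<^esub> k) ` H = H"
      and almost_direct: "comm_sub (AutF n) K H \<subseteq> comm_sub (AutF n) H H"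
      and johnson_disjoint: "\<forall>i \<ge> 1. \<forall>h \<in> andreadakis n i \<inter> H. \<forall>k \<in> andreadakis n i \<inter> K.
             inv\<^bsub>AutF n\<^esub> k \<otimes>\<^bsub>AutF n\<^esub> h \<in> andreadakis n (Suc i) \<longrightarrow> h \<in> andreadakis n (Suc i)"
      and andreadakis_H: "\<forall>j \<ge> 1. lower_central (AutF n) H j = andreadakis n j \<inter> H"
      and andreadakis_K: "\<forall>j \<ge> 1. lower_central (AutF n) K j = andreadakis n j \<inter> K"
  shows "\<forall>j \<ge> 1. lower_central (AutF n) (H <#>\<^bsub>AutF n\<^esub> K) j
                   = andreadakis n j \<inter> (H <#>\<^bsub>AutF n\<^esub> K)"
proof -
  have gA: "group (AutF n)" by (rule group_AutF)
  have nrmK: "k \<otimes>\<^bsub>AutF n\<^esub> h \<otimes>\<^bsub>AutF n\<^esub> inv\<^bsub>AutF n\<^esub> k \<in> H" if "k \<in> K" "h \<in> H" for k h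
    using normalizes that by blast
  have adh: "cmt (AutF n) k h \<in> lower_central (AutF n) H 2" if "k \<in> K" "h \<in> H" for k h
  proof -
    have "cmt (AutF n) k h \<in> comm_sub (AutF n) K H" by (rule group.comm_in[OF gA that])
    then have "cmt (AutF n) k h \<in> comm_sub (AutF n) H H" using almost_direct by blast
    then show ?thesis by (simp add: numeral_2_eq_2)
  qed
  interpret adp "AutF n" H K
    by (rule adp.intro[OF gA]) (rule adp_axioms.intro[OF H_sub K_sub nrmK adh])
  let ?A = "andreadakis n"
  let ?HK = "H <#>\<^bsub>AutF n\<^esub> K"
  have Asub: "subgroup (?A j) (AutF n)" for j by (rule andreadakis_subgroup)
  have A1: "H \<subseteq> ?A 1" "K \<subseteq> ?A 1" using H_IA K_IA by (auto simp: IA_def)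
  have JS: "\<forall>h\<in>H. \<forall>k\<in>K. h \<otimes>\<^bsub>AutF n\<^esub> k \<in> ?A (Suc j) \<longrightarrow> h \<in> ?A (Suc j) \<and> k \<in> ?A (Suc j)" for j
  proof (induction j)
    case 0 then show ?case using A1 by auto
  next
    case (Suc j)
    show ?case
    proof (intro ballI impI)
      fix h k assume h: "h \<in> H" and k: "k \<in> K" and hk: "h \<otimes>\<^bsub>AutF n\<^esub> k \<in> ?A (Suc (Suc j))"
      have hc: "h \<in> carrier (AutF n)" by (rule Hc[OF h])
      have kc: "k \<in> carrier (AutF n)" by (rule Kc[OF k])
      have "h \<otimes>\<^bsub>AutF n\<^esub> k \<in> ?A (Suc j)" using hk andreadakis_decr by blast
      then have hA: "h \<in> ?A (Suc j)" and kA: "k \<in> ?A (Suc j)" using Suc.IH h k by auto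
      let ?h' = "inv\<^bsub>AutF n\<^esub> k \<otimes>\<^bsub>AutF n\<^esub> h \<otimes>\<^bsub>AutF n\<^esub> k"
      let ?k' = "inv\<^bsub>AutF n\<^esub> k"
      have k'K: "?k' \<in> K" by (rule subgroup.m_inv_closed[OF K_sub k])
      have "?k' \<otimes>\<^bsub>AutF n\<^esub> h \<otimes>\<^bsub>AutF n\<^esub> inv\<^bsub>AutF n\<^esub> ?k' \<in> H" by (rule nrmK[OF k'K h])
      then have h'H: "?h' \<in> H" using kc by simp
      have k'A: "?k' \<in> ?A (Suc j)" by (rule subgroup.m_inv_closed[OF Asub kA])
      have h'A: "?h' \<in> ?A (Suc j)"
        by (rule subgroup.m_closed[OF Asub subgroup.m_closed[OF Asub k'A hA] kA])
      have e1: "inv\<^bsub>AutF n\<^esub> ?k' \<otimes>\<^bsub>AutF n\<^esub> ?h' = h \<otimes>\<^bsub>AutF n\<^esub> k"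
        using hc kc by (simp add: gsimps)
      have "?h' \<in> ?A (Suc (Suc j))"
        using johnson_disjoint[rule_format, of "Suc j" ?h' ?k'] h'A h'H k'A k'K hk e1 by simp
      then have ih'A: "inv\<^bsub>AutF n\<^esub> ?h' \<in> ?A (Suc (Suc j))" by (rule subgroup.m_inv_closed[OF Asub])
      have e2: "k = (h \<otimes>\<^bsub>AutF n\<^esub> k) \<otimes>\<^bsub>AutF n\<^esub> inv\<^bsub>AutF n\<^esub> ?h'"
        using hc kc by (simp add: gsimps)
      have kA2: "k \<in> ?A (Suc (Suc j))"
        using subgroup.m_closed[OF Asub hk ih'A] e2 by simp
      have e3: "h = (h \<otimes>\<^bsub>AutF n\<^esub> k) \<otimes>\<^bsub>AutF n\<^esub> inv\<^bsub>AutF n\<^esub> k"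
        using hc kc by (simp add: gsimps)
      have "h \<in> ?A (Suc (Suc j))"
        using subgroup.m_closed[OF Asub hk subgroup.m_inv_closed[OF Asub kA2]] e3 by simp
      then show "h \<in> ?A (Suc (Suc j)) \<and> k \<in> ?A (Suc (Suc j))" using kA2 by simp
    qed
  qed
  have J: "h \<in> ?A j \<and> k \<in> ?A j" if jj: "1 \<le> j" "h \<in> H" "k \<in> K" "h \<otimes>\<^bsub>AutF n\<^esub> k \<in> ?A j" for j h k
  proof -
    obtain j' where "j = Suc j'" using jj(1) by (cases j) auto
    then show ?thesis using JS[of j'] jj by blast
  qed
  have decomp: "\<exists>h' \<in> lower_central (AutF n) H j. \<exists>k' \<in> lower_central (AutF n) K j. g = h' \<otimes>\<^bsub>AutF n\<^esub> k'"
    if j: "1 \<le> j" and g: "g \<in> ?A j" "g \<in> ?HK" for j g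
  proof -
    obtain h k where hk: "h \<in> H" "k \<in> K" "g = h \<otimes>\<^bsub>AutF n\<^esub> k" using g(2) by (auto simp: mem_HK)
    then have "h \<in> ?A j" "k \<in> ?A j" using J[OF j hk(1,2)] g(1) by auto
    then have "h \<in> lower_central (AutF n) H j" "k \<in> lower_central (AutF n) K j"
      using andreadakis_H andreadakis_K j hk by auto
    then show ?thesis using hk(3) by blast
  qed
  have sub1: "lower_central (AutF n) ?HK (Suc j) \<subseteq> ?A (Suc j)" for j
  proof (induction j)
    case 0
    show ?case
    proof
      fix g assume "g \<in> lower_central (AutF n) ?HK (Suc 0)"
      then obtain h k where hk: "h \<in> H" "k \<in> K" "g = h \<otimes>\<^bsub>AutF n\<^esub> k" by (auto simp: mem_HK)
      then show "g \<in> ?A (Suc 0)" using subgroup.m_closed[OF Asub, of h 1 k] A1 by auto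
    qed
  next
    case (Suc j)
    have "comm_sub (AutF n) ?HK (lower_central (AutF n) ?HK (Suc j)) \<subseteq> ?A (Suc (Suc j))"
    proof (rule comm_sub_into[OF Asub])
      fix g c assume g: "g \<in> ?HK" and c: "c \<in> lower_central (AutF n) ?HK (Suc j)"
      have "c \<in> ?A (Suc j)" using c Suc.IH by blast
      moreover have "c \<in> ?HK" using c lc_sub[OF HK_sub] by blast
      ultimately obtain h' k' where hk': "h' \<in> lower_central (AutF n) H (Suc j)"
        "k' \<in> lower_central (AutF n) K (Suc j)" "c = h' \<otimes>\<^bsub>AutF n\<^esub> k'"
        using decomp[of "Suc j" c] by auto
      have QH: "lower_central (AutF n) H (Suc (Suc j)) \<subseteq> ?A (Suc (Suc j))"
        using andreadakis_H[rule_format, of "Suc (Suc j)"] by auto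
      have QK: "lower_central (AutF n) K (Suc (Suc j)) \<subseteq> ?A (Suc (Suc j))"
        using andreadakis_K[rule_format, of "Suc (Suc j)"] by auto
      show "cmt (AutF n) g c \<in> ?A (Suc (Suc j))"
        using P[OF _ g hk'(1) hk'(2) Asub QH QK] hk'(3) by simp
    qed
    then show ?case by simp
  qed
  show ?thesis
  proof (intro allI impI equalityI subsetI)
    fix j g assume j: "1 \<le> j" and g: "g \<in> lower_central (AutF n) ?HK j"
    obtain j' where j': "j = Suc j'" using j by (cases j) auto
    have "g \<in> ?A j" using sub1[of j'] g j' by blast
    moreover have "g \<in> ?HK" using g lc_sub[OF HK_sub] by blast
    ultimately show "g \<in> ?A j \<inter> ?HK" by blast
  next
    fix j g assume j: "1 \<le> j" and g: "g \<in> ?A j \<inter> ?HK"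
    then obtain h' k' where hk': "h' \<in> lower_central (AutF n) H j"
        "k' \<in> lower_central (AutF n) K j" "g = h' \<otimes>\<^bsub>AutF n\<^esub> k'"
      using decomp[OF j] by blast
    have "h' \<in> lower_central (AutF n) ?HK j" using hk'(1) lc_mono[OF H_HK] by blast
    moreover have "k' \<in> lower_central (AutF n) ?HK j" using hk'(2) lc_mono[OF K_HK] by blast
    ultimately show "g \<in> lower_central (AutF n) ?HK j"
      using subgroup.m_closed[OF lc_subgroup[OF HK_sub]] hk'(3) by simp
  qed
qed

end
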